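(* Let $I\subset\mathbb{R}$ be an interval, let $(a_i)_{i\ge1}$ be a real sequence with all $a_i\in I$, and let $\psi:I\to\mathbb{R}$ be a non-decreasing convex function. Then $T_a\subset T_{\psi(a)}$, where $\psi(a)=(\psi(a_i))_{i\ge1}$.
   Context: For a real sequence $(x_i)$, $\Delta x_i=x_{i+1}-x_i$. "Increasing" means strictly increasing. For a real sequence $a=(a_i)$, $T_a$ denotes the set of increasing real sequences $t=(t_i)$ with the same index set such that $(\Delta a_i/\Delta t_i)$ is non-decreasing. *)

theory Defs
  imports "HOL-Analysis.Analysis"
begin

text \<open>Sequences are indexed by i \<ge> 1 and modelled as functions nat \<Rightarrow> real;
  the value at index 0 is ignored.\<close>

definition fwd_diff :: "(nat \<Rightarrow> real) \<Rightarrow> nat \<Rightarrow> real" ("\<Delta>") where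
  "\<Delta> x i = x (Suc i) - x i"

definition T_set :: "(nat \<Rightarrow> real) \<Rightarrow> (nat \<Rightarrow> real) set" where
  "T_set a = {t. (\<forall>i\<ge>1. t i < t (Suc i)) \<and>
                 (\<forall>i\<ge>1. \<Delta> a i / \<Delta> t i \<le> \<Delta> a (Suc i) / \<Delta> t (Suc i))}"

end

theory Submission
  imports Defs
begin

lemma key3:
  fixes f :: "real \<Rightarrow> real"
  assumes "convex_on I f" "u \<in> I" "w \<in> I" "u < v" "v < w"
  shows "(f v - f u) * (w - v) \<le> (f w - f v) * (v - u)"
proof -
  have "(f u - f v) / (u - v) \<le> (f v - f w) / (v - w)"
    using convex_on_slope_le[OF assms(1,2,3,4,5)] by linarith
  hence "(f v - f u) / (v - u) \<le> (f w - f v) / (w - v)"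
    by (metis minus_diff_eq minus_divide_divide)
  thus ?thesis using assms(4,5) by (simp add: divide_simps)
qed

lemma arith1:
  fixes A B d1 d2 h1 h2 :: real
  assumes "d1 > 0" "d2 > 0" "h1 > 0" "h2 > 0" "A \<ge> 0" "B \<ge> 0"
    "A * d2 \<le> B * d1" "d1 * h2 \<le> d2 * h1"
  shows "A * h2 \<le> B * h1"
proof -
  have "(A * h2) * d1 = A * (d1 * h2)" by simp
  also have "\<dots> \<le> A * (d2 * h1)" using assms by (intro mult_left_mono) auto
  also have "\<dots> = (A * d2) * h1" by simp
  also have "\<dots> \<le> (B * d1) * h1" using assms by (intro mult_right_mono) auto
  also have "\<dots> = (B * h1) * d1" by simp
  finally have "(A * h2) * d1 \<le> (B * h1) * d1" .
  thus ?thesis using assms(1) by simp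
qed

lemma step:
  fixes \<psi> :: "real \<Rightarrow> real"
  assumes I: "is_interval I" "x \<in> I" "y \<in> I" "z \<in> I"
    and m: "mono_on I \<psi>" and c: "convex_on I \<psi>"
    and h: "h1 > 0" "h2 > 0" "(y - x) / h1 \<le> (z - y) / h2"
  shows "(\<psi> y - \<psi> x) / h1 \<le> (\<psi> z - \<psi> y) / h2"
proof -
  have hyp: "(y - x) * h2 \<le> (z - y) * h1" using h by (simp add: divide_simps)
  have goal: "(\<psi> y - \<psi> x) * h2 \<le> (\<psi> z - \<psi> y) * h1"
  proof (cases "x < y")
    case True
    have "0 < (y - x) * h2" using True h by simp
    hence yz: "y < z" using hyp h by (smt (verit) mult_nonneg_nonneg mult_nonpos_nonneg)
    have A: "\<psi> x \<le> \<psi> y" using m I True by (auto intro: mono_onD)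
    have B: "\<psi> y \<le> \<psi> z" using m I yz by (auto intro: mono_onD)
    have K: "(\<psi> y - \<psi> x) * (z - y) \<le> (\<psi> z - \<psi> y) * (y - x)"
      using key3[OF c I(2) I(4) True yz] .
    show ?thesis
      by (rule arith1[of "y - x" "z - y"]) (use True yz h A B K hyp in \<open>auto simp: mult.commute\<close>)
  next
    case False
    show ?thesis
    proof (cases "y \<le> z")
      case True
      have B: "\<psi> y \<le> \<psi> z" using m I True by (auto intro: mono_onD)
      have A: "\<psi> y \<le> \<psi> x" using m I False by (auto intro: mono_onD)
      have "(\<psi> y - \<psi> x) * h2 \<le> 0" using A h by (simp add: mult_nonpos_nonneg)
      also have "0 \<le> (\<psi> z - \<psi> y) * h1" using B h by simp
      finally show ?thesis .
    next
      case zy: False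
      have "(z - y) * h1 < 0" using zy h by (simp add: mult_neg_pos)
      hence xy: "y < x" using hyp h False by (smt (verit) mult_nonneg_nonneg)
      have A: "\<psi> y \<le> \<psi> x" using m I False by (auto intro: mono_onD)
      have B: "\<psi> z \<le> \<psi> y" using m I zy by (auto intro: mono_onD)
      have K: "(\<psi> y - \<psi> z) * (x - y) \<le> (\<psi> x - \<psi> y) * (y - z)"
        using key3[OF c I(4) I(2)] zy xy by simp
      have "(\<psi> y - \<psi> z) * h1 \<le> (\<psi> x - \<psi> y) * h2"
        by (rule arith1[of "y - z" "x - y"]) (use zy xy h A B K hyp in \<open>auto simp: mult.commute algebra_simps\<close>)
      thus ?thesis by (simp add: algebra_simps)
    qed
  qed
  thus ?thesis using h by (simp add: divide_simps)
qed

theorem corollary3p2: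
  fixes I :: "real set" and a :: "nat \<Rightarrow> real" and \<psi> :: "real \<Rightarrow> real"
  assumes "is_interval I"
    and "\<forall>i\<ge>1. a i \<in> I"
    and "mono_on I \<psi>"
    and "convex_on I \<psi>"
  shows "T_set a \<subseteq> T_set (\<lambda>i. \<psi> (a i))"
proof
  fix t assume "t \<in> T_set a"
  hence inc: "\<forall>i\<ge>1. t i < t (Suc i)"
    and sl: "\<forall>i\<ge>1. \<Delta> a i / \<Delta> t i \<le> \<Delta> a (Suc i) / \<Delta> t (Suc i)"
    by (auto simp: T_set_def)
  have "\<Delta> (\<lambda>i. \<psi> (a i)) i / \<Delta> t i \<le> \<Delta> (\<lambda>i. \<psi> (a i)) (Suc i) / \<Delta> t (Suc i)"
    if i: "i \<ge> 1" for i
  proof -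
    have "(\<psi> (a (Suc i)) - \<psi> (a i)) / (t (Suc i) - t i)
        \<le> (\<psi> (a (Suc (Suc i))) - \<psi> (a (Suc i))) / (t (Suc (Suc i)) - t (Suc i))"
      apply (rule step[OF assms(1) _ _ _ assms(3,4)])
      using assms(2) inc sl i by (auto simp: fwd_diff_def)
    thus ?thesis by (simp add: fwd_diff_def)
  qed
  with inc show "t \<in> T_set (\<lambda>i. \<psi> (a i))" by (auto simp: T_set_def)
qed

end
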